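(* Let $\mathrm{SG}(n)$ denote the Sprague--Grundy value of a pile of $n$ tokens in the game $i\textsc{-Mark}(\{1\},\{2,3\})$. For every integer $n>3$ there exists an integer $i$ with $1\le i\le 49$ and $i\le n$ such that $\mathrm{SG}(n-i)=2$.
   Context: In the impartial game $i\textsc{-Mark}(\{1\},\{2,3\})$, played on a single pile of $n\ge0$ tokens, a move replaces $n$ by $n-1$ (if $n\ge 1$), or by $n/2$ if $n>0$ is even, or by $n/3$ if $n>0$ is divisible by $3$. The Sprague--Grundy value is defined recursively by $\mathrm{SG}(n)=\mathrm{mex}\{\mathrm{SG}(w): w \text{ an option of } n\}$, where $\mathrm{mex}(T)$ is the smallest nonnegative integer not in $T$. *)

theory Defs
  imports Main
begin

definition mex :: "nat set \<Rightarrow> nat" where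
  "mex T = (LEAST k. k \<notin> T)"

definition opts :: "nat \<Rightarrow> nat set" where
  "opts n = {w. (n \<ge> 1 \<and> w = n - 1) \<or> (n > 0 \<and> 2 dvd n \<and> w = n div 2)
                \<or> (n > 0 \<and> 3 dvd n \<and> w = n div 3)}"

function SG :: "nat \<Rightarrow> nat" where
  "SG n = mex (SG ` opts n)"
  by auto
termination
proof (relation "measure id")
  show "wf (measure id)" by simp
next
  fix n w assume "w \<in> opts n"
  then show "(w, n) \<in> measure id" by (auto simp: opts_def)
qed

declare SG.simps [simp del]

end

theory Submission
  imports Defs
begin

lemma mex_eqI: "k \<notin> T \<Longrightarrow> (\<And>j. j < k \<Longrightarrow> j \<in> T) \<Longrightarrow> mex T = k"
  unfolding mex_def by (rule Least_equality) (auto simp: not_less[symmetric])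

lemma mex1: "mex {a} = (if a = 0 then 1 else 0)"
  by (rule mex_eqI) (auto split: if_splits)

lemma mex2: "mex {a, b} = (if a \<noteq> 0 \<and> b \<noteq> 0 then 0 else if a \<noteq> 1 \<and> b \<noteq> 1 then 1 else 2)"
  by (rule mex_eqI) (auto split: if_splits simp: less_Suc_eq numeral_2_eq_2)

lemma mex3: "mex {a, b, c} = (if a \<noteq> 0 \<and> b \<noteq> 0 \<and> c \<noteq> 0 then 0
   else if a \<noteq> 1 \<and> b \<noteq> 1 \<and> c \<noteq> 1 then 1
   else if a \<noteq> 2 \<and> b \<noteq> 2 \<and> c \<noteq> 2 then 2 else 3)"
  by (rule mex_eqI) (auto split: if_splits simp: less_Suc_eq numeral_2_eq_2 numeral_3_eq_3)

lemma opts_eq: "n = m + 1 \<Longrightarrow> opts n = {m} \<union> (if 2 dvd n then {n div 2} else {}) \<union> (if 3 dvd n then {n div 3} else {})"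
  unfolding opts_def by auto

lemma SG_opt1: "n = m + 1 \<Longrightarrow> \<not> 2 dvd n \<Longrightarrow> \<not> 3 dvd n \<Longrightarrow> SG n = mex {SG m}"
proof -
  assume a: "n = m + 1" "\<not> 2 dvd n" "\<not> 3 dvd n"
  have "opts n = {m}" using opts_eq[OF a(1)] a(2,3) by simp
  then show ?thesis using SG.simps[of n] by (simp add: algebra_simps)
qed

lemma SG_opt2: "n = m + 1 \<Longrightarrow> n = 2 * h \<Longrightarrow> \<not> 3 dvd n \<Longrightarrow> SG n = mex {SG m, SG h}"
proof -
  assume a: "n = m + 1" "n = 2 * h" "\<not> 3 dvd n"
  have b: "2 dvd n" "n div 2 = h" using a(2) by simp_all
  have "opts n = {m, h}" using opts_eq[OF a(1)] a(3) b by (simp add: insert_commute)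
  then show ?thesis using SG.simps[of n] by (simp add: algebra_simps)
qed

lemma SG_opt3: "n = m + 1 \<Longrightarrow> \<not> 2 dvd n \<Longrightarrow> n = 3 * t \<Longrightarrow> SG n = mex {SG m, SG t}"
proof -
  assume a: "n = m + 1" "\<not> 2 dvd n" "n = 3 * t"
  have b: "3 dvd n" "n div 3 = t" using a(3) by simp_all
  have "opts n = {m, t}" using opts_eq[OF a(1)] a(2) b by (simp add: insert_commute)
  then show ?thesis using SG.simps[of n] by (simp add: algebra_simps)
qed

lemma SG_opt6: "n = m + 1 \<Longrightarrow> n = 2 * h \<Longrightarrow> n = 3 * t \<Longrightarrow> SG n = mex {SG m, SG h, SG t}"
proof -
  assume a: "n = m + 1" "n = 2 * h" "n = 3 * t"
  have b: "2 dvd n" "n div 2 = h" using a(2) by simp_all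
  have c: "3 dvd n" "n div 3 = t" using a(3) by simp_all
  have "opts n = {m, h, t}" using opts_eq[OF a(1)] b c by auto
  then show ?thesis using SG.simps[of n] by (simp add: algebra_simps)
qed

lemma mex_le3: "T \<subseteq> {a, b, c} \<Longrightarrow> mex T \<le> 3"
proof -
  assume T: "T \<subseteq> {a, b, c}"
  obtain k :: nat where k: "k \<le> 3" "k \<notin> {a, b, c}"
  proof (cases "0 \<in> {a,b,c} \<and> 1 \<in> {a,b,c} \<and> 2 \<in> {a,b,c}")
    case True
    then have "3 \<notin> {a, b, c}" by auto
    then show ?thesis using that by auto
  next
    case False
    then show ?thesis using that[of 0] that[of 1] that[of 2] by auto
  qed
  then have "k \<notin> T" using T by auto
  then have "mex T \<le> k" unfolding mex_def by (rule Least_le)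
  then show ?thesis using k by simp
qed

lemma SG_le3: "SG n \<le> 3"
proof -
  have "opts n \<subseteq> {n - 1, n div 2, n div 3}" unfolding opts_def by auto
  then have "SG ` opts n \<subseteq> {SG (n - 1), SG (n div 2), SG (n div 3)}" by auto
  then show ?thesis using SG.simps[of n] mex_le3 by metis
qed

lemma abs14:
  fixes v8_2 v12_3 v18_4 v18_5 v24_5 v24_6 v24_7 v36_7 v36_8 v36_9 v36_10 v72_13 v72_14 v72_15 v72_16 v72_17 v72_18 v72_19 v72_20 v72_21 :: nat
  assumes bnd_v8_2: "v8_2 \<le> 3"
    and bnd_v12_3: "v12_3 \<le> 3"
    and bnd_v18_4: "v18_4 \<le> 3"
    and bnd_v18_5: "v18_5 \<le> 3"
    and bnd_v24_5: "v24_5 \<le> 3"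
    and bnd_v24_6: "v24_6 \<le> 3"
    and bnd_v24_7: "v24_7 \<le> 3"
    and bnd_v36_7: "v36_7 \<le> 3"
    and bnd_v36_8: "v36_8 \<le> 3"
    and bnd_v36_9: "v36_9 \<le> 3"
    and bnd_v36_10: "v36_10 \<le> 3"
    and bnd_v72_13: "v72_13 \<le> 3"
    and bnd_v72_14: "v72_14 \<le> 3"
    and bnd_v72_15: "v72_15 \<le> 3"
    and bnd_v72_16: "v72_16 \<le> 3"
    and bnd_v72_17: "v72_17 \<le> 3"
    and bnd_v72_18: "v72_18 \<le> 3"
    and bnd_v72_19: "v72_19 \<le> 3"
    and bnd_v72_20: "v72_20 \<le> 3"
    and bnd_v72_21: "v72_21 \<le> 3"
    and win_v72_14: "v72_14 \<noteq> 2"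
    and win_v72_15: "v72_15 \<noteq> 2"
    and win_v72_16: "v72_16 \<noteq> 2"
    and win_v72_18: "v72_18 \<noteq> 2"
    and win_v72_20: "v72_20 \<noteq> 2"
    and win_v72_21: "v72_21 \<noteq> 2"
    and c0: "v18_5 = (if v18_4 = 0 then 1 else 0)"
    and c1: "v24_6 = (if v24_5 \<noteq> 0 \<and> v12_3 \<noteq> 0 \<and> v8_2 \<noteq> 0 then 0 else if v24_5 \<noteq> 1 \<and> v12_3 \<noteq> 1 \<and> v8_2 \<noteq> 1 then 1 else if v24_5 \<noteq> 2 \<and> v12_3 \<noteq> 2 \<and> v8_2 \<noteq> 2 then 2 else 3)"
    and c2: "v24_7 = (if v24_6 = 0 then 1 else 0)"
    and c3: "v36_8 = (if v36_7 \<noteq> 0 \<and> v18_4 \<noteq> 0 then 0 else if v36_7 \<noteq> 1 \<and> v18_4 \<noteq> 1 then 1 else 2)"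
    and c4: "v36_9 = (if v36_8 \<noteq> 0 \<and> v12_3 \<noteq> 0 then 0 else if v36_8 \<noteq> 1 \<and> v12_3 \<noteq> 1 then 1 else 2)"
    and c5: "v36_10 = (if v36_9 \<noteq> 0 \<and> v18_5 \<noteq> 0 then 0 else if v36_9 \<noteq> 1 \<and> v18_5 \<noteq> 1 then 1 else 2)"
    and c6: "v72_14 = (if v72_13 \<noteq> 0 \<and> v36_7 \<noteq> 0 then 0 else if v72_13 \<noteq> 1 \<and> v36_7 \<noteq> 1 then 1 else 2)"
    and c7: "v72_15 = (if v72_14 \<noteq> 0 \<and> v24_5 \<noteq> 0 then 0 else if v72_14 \<noteq> 1 \<and> v24_5 \<noteq> 1 then 1 else 2)"
    and c8: "v72_16 = (if v72_15 \<noteq> 0 \<and> v36_8 \<noteq> 0 then 0 else if v72_15 \<noteq> 1 \<and> v36_8 \<noteq> 1 then 1 else 2)"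
    and c9: "v72_17 = (if v72_16 = 0 then 1 else 0)"
    and c10: "v72_18 = (if v72_17 \<noteq> 0 \<and> v36_9 \<noteq> 0 \<and> v24_6 \<noteq> 0 then 0 else if v72_17 \<noteq> 1 \<and> v36_9 \<noteq> 1 \<and> v24_6 \<noteq> 1 then 1 else if v72_17 \<noteq> 2 \<and> v36_9 \<noteq> 2 \<and> v24_6 \<noteq> 2 then 2 else 3)"
    and c11: "v72_19 = (if v72_18 = 0 then 1 else 0)"
    and c12: "v72_20 = (if v72_19 \<noteq> 0 \<and> v36_10 \<noteq> 0 then 0 else if v72_19 \<noteq> 1 \<and> v36_10 \<noteq> 1 then 1 else 2)"
    and c13: "v72_21 = (if v72_20 \<noteq> 0 \<and> v24_7 \<noteq> 0 then 0 else if v72_20 \<noteq> 1 \<and> v24_7 \<noteq> 1 then 1 else 2)"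
  shows False
proof -
  have b_v8_2: "v8_2 \<in> {0, 1, 2, 3}" using bnd_v8_2 by auto
  have b_v12_3: "v12_3 \<in> {0, 1, 2, 3}" using bnd_v12_3 by auto
  have b_v18_4: "v18_4 \<in> {0, 1, 2, 3}" using bnd_v18_4 by auto
  have b_v18_5: "v18_5 \<in> {0, 1, 2, 3}" using bnd_v18_5 by auto
  have b_v24_5: "v24_5 \<in> {0, 1, 2, 3}" using bnd_v24_5 by auto
  have b_v24_6: "v24_6 \<in> {0, 1, 2, 3}" using bnd_v24_6 by auto
  have b_v24_7: "v24_7 \<in> {0, 1, 2, 3}" using bnd_v24_7 by auto
  have b_v36_7: "v36_7 \<in> {0, 1, 2, 3}" using bnd_v36_7 by auto
  have b_v36_8: "v36_8 \<in> {0, 1, 2, 3}" using bnd_v36_8 by auto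
  have b_v36_9: "v36_9 \<in> {0, 1, 2, 3}" using bnd_v36_9 by auto
  have b_v36_10: "v36_10 \<in> {0, 1, 2, 3}" using bnd_v36_10 by auto
  have b_v72_13: "v72_13 \<in> {0, 1, 2, 3}" using bnd_v72_13 by auto
  have b_v72_14: "v72_14 \<in> {0, 1, 3}" using bnd_v72_14 win_v72_14 by auto
  have b_v72_15: "v72_15 \<in> {0, 1, 3}" using bnd_v72_15 win_v72_15 by auto
  have b_v72_16: "v72_16 \<in> {0, 1, 3}" using bnd_v72_16 win_v72_16 by auto
  have b_v72_17: "v72_17 \<in> {0, 1, 2, 3}" using bnd_v72_17 by auto
  have b_v72_18: "v72_18 \<in> {0, 1, 3}" using bnd_v72_18 win_v72_18 by auto
  have b_v72_19: "v72_19 \<in> {0, 1, 2, 3}" using bnd_v72_19 by auto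
  have b_v72_20: "v72_20 \<in> {0, 1, 3}" using bnd_v72_20 win_v72_20 by auto
  have b_v72_21: "v72_21 \<in> {0, 1, 3}" using bnd_v72_21 win_v72_21 by auto
  have d1: "v18_5 \<in> {0, 1}" using c0 b_v18_4 b_v18_5 by auto
  have d2: "v24_7 \<in> {0, 1}" using c2 b_v24_6 b_v24_7 by auto
  have d3: "v36_8 \<in> {0, 1, 2}" using c3 b_v18_4 b_v36_7 b_v36_8 by auto
  have d4: "v36_9 \<in> {0, 1, 2}" using c4 b_v12_3 b_v36_9 d3 by auto
  have d5: "v36_10 \<in> {0, 1, 2}" using c5 b_v36_10 d1 d4 by auto
  have d6: "v72_14 \<in> {0, 1}" using c6 b_v36_7 b_v72_13 b_v72_14 by auto
  have d7: "v72_15 \<in> {0, 1}" using c7 b_v24_5 b_v72_15 d6 by auto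
  have d8: "v72_16 \<in> {0, 1}" using c8 b_v72_16 d3 d7 by auto
  have d9: "v72_17 \<in> {0, 1}" using c9 b_v72_17 d8 by auto
  have d10: "v72_19 \<in> {0, 1}" using c11 b_v72_18 b_v72_19 by auto
  have d11: "v72_20 \<in> {0, 1}" using c12 b_v72_20 d10 d5 by auto
  have d12: "v72_21 \<in> {0, 1}" using c13 b_v72_21 d11 d2 by auto
  from d6 show False
  proof (elim insertE emptyE)
    assume d13: "v72_14 = 0"
    have d14: "v72_13 \<in> {1, 2, 3}" using c6 b_v36_7 b_v72_13 d13 by auto
    have d15: "v36_7 \<in> {1, 2, 3}" using c6 b_v36_7 d13 d14 by auto
    have d16: "v72_15 \<in> {1}" using c7 b_v24_5 d13 d7 by auto
    have d17: "v24_5 \<in> {0, 2, 3}" using c7 b_v24_5 d13 d16 by auto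
    have d18: "v72_16 \<in> {0}" using c8 d16 d3 d8 by auto
    have d19: "v36_8 \<in> {1, 2}" using c8 d16 d18 d3 by auto
    have d20: "v72_17 \<in> {1}" using c9 d18 d9 by auto
    have d21: "v72_18 \<in> {0, 3}" using c10 b_v24_6 b_v72_18 d20 d4 by auto
    have d22: "v18_4 \<in> {0}" using c3 b_v18_4 d15 d19 by auto
    have d23: "v18_5 \<in> {1}" using c0 d1 d22 by auto
    have d24: "v36_10 \<in> {0, 2}" using c5 d23 d4 d5 by auto
    from d21 show False
    proof (elim insertE emptyE)
      assume d25: "v72_18 = 0"
      have d26: "v36_9 \<in> {1, 2}" using c10 b_v24_6 d20 d25 d4 by auto
      have d27: "v24_6 \<in> {1, 2, 3}" using c10 b_v24_6 d20 d25 d26 by auto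
      have d28: "v72_19 \<in> {1}" using c11 d10 d25 by auto
      have d29: "v72_20 \<in> {0}" using c12 d11 d24 d28 by auto
      have d30: "v36_10 \<in> {2}" using c12 d24 d28 d29 by auto
      have d31: "v72_21 \<in> {1}" using c13 d12 d2 d29 by auto
      have d32: "v24_7 \<in> {0}" using c13 d2 d29 d31 by auto
      have d33: "v12_3 \<in> {0}" using c4 b_v12_3 d19 d26 by auto
      show False using c5 d23 d26 d30 by auto
    next
      assume d34: "v72_18 = 3"
      have d35: "v36_9 \<in> {0, 2}" using c10 b_v24_6 d20 d34 d4 by auto
      have d36: "v24_6 \<in> {0, 2}" using c10 b_v24_6 d20 d34 d35 by auto
      have d37: "v72_19 \<in> {0}" using c11 d10 d34 by auto
      have d38: "v72_20 \<in> {1}" using c12 d11 d24 d37 by auto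
      have d39: "v72_21 \<in> {0}" using c13 d12 d2 d38 by auto
      have d40: "v24_7 \<in> {1}" using c13 d2 d38 d39 by auto
      have d41: "v24_6 \<in> {0}" using c2 d36 d40 by auto
      have d42: "v36_9 \<in> {2}" using c10 d20 d34 d35 d41 by auto
      have d43: "v24_5 \<in> {2, 3}" using c1 b_v12_3 b_v8_2 d17 d41 by auto
      have d44: "v12_3 \<in> {1, 2, 3}" using c1 b_v12_3 b_v8_2 d41 d43 by auto
      have d45: "v8_2 \<in> {1, 2, 3}" using c1 b_v8_2 d41 d43 d44 by auto
      show False using c4 d19 d42 d44 by auto
    qed
  next
    assume d46: "v72_14 = 1"
    have d47: "v72_13 \<in> {0, 2, 3}" using c6 b_v36_7 b_v72_13 d46 by auto
    have d48: "v36_7 \<in> {0, 2, 3}" using c6 b_v36_7 d46 d47 by auto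
    have d49: "v72_15 \<in> {0}" using c7 b_v24_5 d46 d7 by auto
    have d50: "v24_5 \<in> {1, 2, 3}" using c7 b_v24_5 d46 d49 by auto
    have d51: "v72_16 \<in> {1}" using c8 d3 d49 d8 by auto
    have d52: "v36_8 \<in> {0, 2}" using c8 d3 d49 d51 by auto
    have d53: "v72_17 \<in> {0}" using c9 d51 d9 by auto
    have d54: "v72_18 \<in> {1, 3}" using c10 b_v24_6 b_v72_18 d4 d53 by auto
    have d55: "v72_19 \<in> {0}" using c11 d10 d54 by auto
    have d56: "v72_20 \<in> {1}" using c12 d11 d5 d55 by auto
    have d57: "v36_10 \<in> {0, 2}" using c12 d5 d55 d56 by auto
    have d58: "v72_21 \<in> {0}" using c13 d12 d2 d56 by auto
    have d59: "v24_7 \<in> {1}" using c13 d2 d56 d58 by auto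
    have d60: "v24_6 \<in> {0}" using c2 b_v24_6 d59 by auto
    have d61: "v18_4 \<in> {1, 2, 3}" using c3 b_v18_4 d48 d52 by auto
    have d62: "v72_18 \<in> {1}" using c10 d4 d53 d54 d60 by auto
    have d63: "v36_9 \<in> {0, 2}" using c10 d4 d53 d60 d62 by auto
    have d64: "v18_5 \<in> {0}" using c0 d1 d61 by auto
    have d65: "v12_3 \<in> {1, 2, 3}" using c1 b_v12_3 b_v8_2 d50 d60 by auto
    have d66: "v8_2 \<in> {1, 2, 3}" using c1 b_v8_2 d50 d60 d65 by auto
    show False using c5 d57 d63 d64 by auto
  qed
qed

lemma pat14: fixes A :: nat shows "\<exists>j<8. SG (72*A+14+j) = 2"
proof (rule ccontr)
  assume H: "\<not> (\<exists>j<8. SG (72*A+14+j) = 2)"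
  have HH: "\<forall>j<8. SG (72*A+14+j) \<noteq> 2" using H by auto
  have w0: "SG (72*A+14) \<noteq> 2" using HH[rule_format, of 0] by (simp add: algebra_simps)
  have w1: "SG (72*A+15) \<noteq> 2" using HH[rule_format, of 1] by (simp add: algebra_simps)
  have w2: "SG (72*A+16) \<noteq> 2" using HH[rule_format, of 2] by (simp add: algebra_simps)
  have w3: "SG (72*A+18) \<noteq> 2" using HH[rule_format, of 4] by (simp add: algebra_simps)
  have w4: "SG (72*A+20) \<noteq> 2" using HH[rule_format, of 6] by (simp add: algebra_simps)
  have w5: "SG (72*A+21) \<noteq> 2" using HH[rule_format, of 7] by (simp add: algebra_simps)
  have c0: "SG (18*A+5) = mex {SG (18*A+4)}" by (rule SG_opt1) (simp|presburger)+
  have c1: "SG (24*A+6) = mex {SG (24*A+5), SG (12*A+3), SG (8*A+2)}" by (rule SG_opt6) (simp|presburger)+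
  have c2: "SG (24*A+7) = mex {SG (24*A+6)}" by (rule SG_opt1) (simp|presburger)+
  have c3: "SG (36*A+8) = mex {SG (36*A+7), SG (18*A+4)}" by (rule SG_opt2) (simp|presburger)+
  have c4: "SG (36*A+9) = mex {SG (36*A+8), SG (12*A+3)}" by (rule SG_opt3) (simp|presburger)+
  have c5: "SG (36*A+10) = mex {SG (36*A+9), SG (18*A+5)}" by (rule SG_opt2) (simp|presburger)+
  have c6: "SG (72*A+14) = mex {SG (72*A+13), SG (36*A+7)}" by (rule SG_opt2) (simp|presburger)+
  have c7: "SG (72*A+15) = mex {SG (72*A+14), SG (24*A+5)}" by (rule SG_opt3) (simp|presburger)+
  have c8: "SG (72*A+16) = mex {SG (72*A+15), SG (36*A+8)}" by (rule SG_opt2) (simp|presburger)+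
  have c9: "SG (72*A+17) = mex {SG (72*A+16)}" by (rule SG_opt1) (simp|presburger)+
  have c10: "SG (72*A+18) = mex {SG (72*A+17), SG (36*A+9), SG (24*A+6)}" by (rule SG_opt6) (simp|presburger)+
  have c11: "SG (72*A+19) = mex {SG (72*A+18)}" by (rule SG_opt1) (simp|presburger)+
  have c12: "SG (72*A+20) = mex {SG (72*A+19), SG (36*A+10)}" by (rule SG_opt2) (simp|presburger)+
  have c13: "SG (72*A+21) = mex {SG (72*A+20), SG (24*A+7)}" by (rule SG_opt3) (simp|presburger)+
  note cs0 = c0 c1 c2 c3 c4 c5 c6 c7 c8 c9 c10 c11 c12 c13
  note cs = cs0[unfolded mex1 mex2 mex3]
  show False by (rule abs14[of "SG (8*A+2)" "SG (12*A+3)" "SG (18*A+4)" "SG (18*A+5)" "SG (24*A+5)" "SG (24*A+6)" "SG (24*A+7)" "SG (36*A+7)" "SG (36*A+8)" "SG (36*A+9)" "SG (36*A+10)" "SG (72*A+13)" "SG (72*A+14)" "SG (72*A+15)" "SG (72*A+16)" "SG (72*A+17)" "SG (72*A+18)" "SG (72*A+19)" "SG (72*A+20)" "SG (72*A+21)", OF SG_le3 SG_le3 SG_le3 SG_le3 SG_le3 SG_le3 SG_le3 SG_le3 SG_le3 SG_le3 SG_le3 SG_le3 SG_le3 SG_le3 SG_le3 SG_le3 SG_le3 SG_le3 SG_le3 SG_le3 w0 w1 w2 w3 w4 w5 cs])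
qed

lemma abs50:
  fixes v9_7 v12_9 v18_13 v18_14 v24_17 v24_18 v24_19 v36_24 v36_25 v36_26 v36_27 v36_28 v72_49 v72_50 v72_51 v72_52 v72_53 v72_54 v72_55 v72_56 v72_57 :: nat
  assumes bnd_v9_7: "v9_7 \<le> 3"
    and bnd_v12_9: "v12_9 \<le> 3"
    and bnd_v18_13: "v18_13 \<le> 3"
    and bnd_v18_14: "v18_14 \<le> 3"
    and bnd_v24_17: "v24_17 \<le> 3"
    and bnd_v24_18: "v24_18 \<le> 3"
    and bnd_v24_19: "v24_19 \<le> 3"
    and bnd_v36_24: "v36_24 \<le> 3"
    and bnd_v36_25: "v36_25 \<le> 3"
    and bnd_v36_26: "v36_26 \<le> 3"
    and bnd_v36_27: "v36_27 \<le> 3"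
    and bnd_v36_28: "v36_28 \<le> 3"
    and bnd_v72_49: "v72_49 \<le> 3"
    and bnd_v72_50: "v72_50 \<le> 3"
    and bnd_v72_51: "v72_51 \<le> 3"
    and bnd_v72_52: "v72_52 \<le> 3"
    and bnd_v72_53: "v72_53 \<le> 3"
    and bnd_v72_54: "v72_54 \<le> 3"
    and bnd_v72_55: "v72_55 \<le> 3"
    and bnd_v72_56: "v72_56 \<le> 3"
    and bnd_v72_57: "v72_57 \<le> 3"
    and win_v72_50: "v72_50 \<noteq> 2"
    and win_v72_51: "v72_51 \<noteq> 2"
    and win_v72_52: "v72_52 \<noteq> 2"
    and win_v72_54: "v72_54 \<noteq> 2"
    and win_v72_56: "v72_56 \<noteq> 2"
    and win_v72_57: "v72_57 \<noteq> 2"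
    and c0: "v18_14 = (if v18_13 \<noteq> 0 \<and> v9_7 \<noteq> 0 then 0 else if v18_13 \<noteq> 1 \<and> v9_7 \<noteq> 1 then 1 else 2)"
    and c1: "v24_19 = (if v24_18 = 0 then 1 else 0)"
    and c2: "v36_25 = (if v36_24 = 0 then 1 else 0)"
    and c3: "v36_26 = (if v36_25 \<noteq> 0 \<and> v18_13 \<noteq> 0 then 0 else if v36_25 \<noteq> 1 \<and> v18_13 \<noteq> 1 then 1 else 2)"
    and c4: "v36_27 = (if v36_26 \<noteq> 0 \<and> v12_9 \<noteq> 0 then 0 else if v36_26 \<noteq> 1 \<and> v12_9 \<noteq> 1 then 1 else 2)"
    and c5: "v36_28 = (if v36_27 \<noteq> 0 \<and> v18_14 \<noteq> 0 then 0 else if v36_27 \<noteq> 1 \<and> v18_14 \<noteq> 1 then 1 else 2)"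
    and c6: "v72_50 = (if v72_49 \<noteq> 0 \<and> v36_25 \<noteq> 0 then 0 else if v72_49 \<noteq> 1 \<and> v36_25 \<noteq> 1 then 1 else 2)"
    and c7: "v72_51 = (if v72_50 \<noteq> 0 \<and> v24_17 \<noteq> 0 then 0 else if v72_50 \<noteq> 1 \<and> v24_17 \<noteq> 1 then 1 else 2)"
    and c8: "v72_52 = (if v72_51 \<noteq> 0 \<and> v36_26 \<noteq> 0 then 0 else if v72_51 \<noteq> 1 \<and> v36_26 \<noteq> 1 then 1 else 2)"
    and c9: "v72_53 = (if v72_52 = 0 then 1 else 0)"
    and c10: "v72_54 = (if v72_53 \<noteq> 0 \<and> v36_27 \<noteq> 0 \<and> v24_18 \<noteq> 0 then 0 else if v72_53 \<noteq> 1 \<and> v36_27 \<noteq> 1 \<and> v24_18 \<noteq> 1 then 1 else if v72_53 \<noteq> 2 \<and> v36_27 \<noteq> 2 \<and> v24_18 \<noteq> 2 then 2 else 3)"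
    and c11: "v72_55 = (if v72_54 = 0 then 1 else 0)"
    and c12: "v72_56 = (if v72_55 \<noteq> 0 \<and> v36_28 \<noteq> 0 then 0 else if v72_55 \<noteq> 1 \<and> v36_28 \<noteq> 1 then 1 else 2)"
    and c13: "v72_57 = (if v72_56 \<noteq> 0 \<and> v24_19 \<noteq> 0 then 0 else if v72_56 \<noteq> 1 \<and> v24_19 \<noteq> 1 then 1 else 2)"
  shows False
proof -
  have b_v9_7: "v9_7 \<in> {0, 1, 2, 3}" using bnd_v9_7 by auto
  have b_v12_9: "v12_9 \<in> {0, 1, 2, 3}" using bnd_v12_9 by auto
  have b_v18_13: "v18_13 \<in> {0, 1, 2, 3}" using bnd_v18_13 by auto
  have b_v18_14: "v18_14 \<in> {0, 1, 2, 3}" using bnd_v18_14 by auto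
  have b_v24_17: "v24_17 \<in> {0, 1, 2, 3}" using bnd_v24_17 by auto
  have b_v24_18: "v24_18 \<in> {0, 1, 2, 3}" using bnd_v24_18 by auto
  have b_v24_19: "v24_19 \<in> {0, 1, 2, 3}" using bnd_v24_19 by auto
  have b_v36_24: "v36_24 \<in> {0, 1, 2, 3}" using bnd_v36_24 by auto
  have b_v36_25: "v36_25 \<in> {0, 1, 2, 3}" using bnd_v36_25 by auto
  have b_v36_26: "v36_26 \<in> {0, 1, 2, 3}" using bnd_v36_26 by auto
  have b_v36_27: "v36_27 \<in> {0, 1, 2, 3}" using bnd_v36_27 by auto
  have b_v36_28: "v36_28 \<in> {0, 1, 2, 3}" using bnd_v36_28 by auto
  have b_v72_49: "v72_49 \<in> {0, 1, 2, 3}" using bnd_v72_49 by auto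
  have b_v72_50: "v72_50 \<in> {0, 1, 3}" using bnd_v72_50 win_v72_50 by auto
  have b_v72_51: "v72_51 \<in> {0, 1, 3}" using bnd_v72_51 win_v72_51 by auto
  have b_v72_52: "v72_52 \<in> {0, 1, 3}" using bnd_v72_52 win_v72_52 by auto
  have b_v72_53: "v72_53 \<in> {0, 1, 2, 3}" using bnd_v72_53 by auto
  have b_v72_54: "v72_54 \<in> {0, 1, 3}" using bnd_v72_54 win_v72_54 by auto
  have b_v72_55: "v72_55 \<in> {0, 1, 2, 3}" using bnd_v72_55 by auto
  have b_v72_56: "v72_56 \<in> {0, 1, 3}" using bnd_v72_56 win_v72_56 by auto
  have b_v72_57: "v72_57 \<in> {0, 1, 3}" using bnd_v72_57 win_v72_57 by auto
  have d1: "v18_14 \<in> {0, 1, 2}" using c0 b_v18_13 b_v18_14 b_v9_7 by auto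
  have d2: "v24_19 \<in> {0, 1}" using c1 b_v24_18 b_v24_19 by auto
  have d3: "v36_25 \<in> {0, 1}" using c2 b_v36_24 b_v36_25 by auto
  have d4: "v36_26 \<in> {0, 1, 2}" using c3 b_v18_13 b_v36_26 d3 by auto
  have d5: "v36_27 \<in> {0, 1, 2}" using c4 b_v12_9 b_v36_27 d4 by auto
  have d6: "v36_28 \<in> {0, 1, 2}" using c5 b_v36_28 d1 d5 by auto
  have d7: "v72_50 \<in> {0, 1}" using c6 b_v72_49 b_v72_50 d3 by auto
  have d8: "v72_51 \<in> {0, 1}" using c7 b_v24_17 b_v72_51 d7 by auto
  have d9: "v72_52 \<in> {0, 1}" using c8 b_v72_52 d4 d8 by auto
  have d10: "v72_53 \<in> {0, 1}" using c9 b_v72_53 d9 by auto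
  have d11: "v72_55 \<in> {0, 1}" using c11 b_v72_54 b_v72_55 by auto
  have d12: "v72_56 \<in> {0, 1}" using c12 b_v72_56 d11 d6 by auto
  have d13: "v72_57 \<in> {0, 1}" using c13 b_v72_57 d12 d2 by auto
  from d7 show False
  proof (elim insertE emptyE)
    assume d14: "v72_50 = 0"
    have d15: "v72_49 \<in> {1, 2, 3}" using c6 b_v72_49 d14 d3 by auto
    have d16: "v36_25 \<in> {1}" using c6 d14 d15 d3 by auto
    have d17: "v72_51 \<in> {1}" using c7 b_v24_17 d14 d8 by auto
    have d18: "v24_17 \<in> {0, 2, 3}" using c7 b_v24_17 d14 d17 by auto
    have d19: "v72_52 \<in> {0}" using c8 d17 d4 d9 by auto
    have d20: "v36_26 \<in> {1, 2}" using c8 d17 d19 d4 by auto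
    have d21: "v72_53 \<in> {1}" using c9 d10 d19 by auto
    have d22: "v72_54 \<in> {0, 3}" using c10 b_v24_18 b_v72_54 d21 d5 by auto
    have d23: "v36_24 \<in> {0}" using c2 b_v36_24 d16 by auto
    have d24: "v36_26 \<in> {2}" using c3 b_v18_13 d16 d20 by auto
    have d25: "v18_13 \<in> {0}" using c3 b_v18_13 d16 d24 by auto
    have d26: "v36_27 \<in> {0, 1}" using c4 b_v12_9 d24 d5 by auto
    have d27: "v24_18 \<in> {1, 2, 3}" using c10 b_v24_18 d21 d22 d26 by auto
    have d28: "v18_14 \<in> {1, 2}" using c0 b_v9_7 d1 d25 by auto
    have d29: "v24_19 \<in> {0}" using c1 d2 d27 by auto
    have d30: "v72_57 \<in> {1}" using c13 d12 d13 d29 by auto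
    have d31: "v72_56 \<in> {0}" using c13 d12 d29 d30 by auto
    have d32: "v72_55 \<in> {1}" using c12 d11 d31 d6 by auto
    have d33: "v36_28 \<in> {1, 2}" using c12 d31 d32 d6 by auto
    have d34: "v36_27 \<in> {0}" using c5 d26 d28 d33 by auto
    have d35: "v72_54 \<in> {3}" using c10 d21 d22 d27 d34 by auto
    have d36: "v24_18 \<in> {2}" using c10 d21 d27 d34 d35 by auto
    show False using c11 d32 d35 by auto
  next
    assume d37: "v72_50 = 1"
    have d38: "v72_49 \<in> {0, 2, 3}" using c6 b_v72_49 d3 d37 by auto
    have d39: "v36_25 \<in> {0}" using c6 d3 d37 d38 by auto
    have d40: "v72_51 \<in> {0}" using c7 b_v24_17 d37 d8 by auto
    have d41: "v24_17 \<in> {1, 2, 3}" using c7 b_v24_17 d37 d40 by auto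
    have d42: "v72_52 \<in> {1}" using c8 d4 d40 d9 by auto
    have d43: "v36_26 \<in> {0, 2}" using c8 d4 d40 d42 by auto
    have d44: "v72_53 \<in> {0}" using c9 d10 d42 by auto
    have d45: "v72_54 \<in> {1, 3}" using c10 b_v24_18 b_v72_54 d44 d5 by auto
    have d46: "v72_55 \<in> {0}" using c11 d11 d45 by auto
    have d47: "v72_56 \<in> {1}" using c12 d12 d46 d6 by auto
    have d48: "v36_28 \<in> {0, 2}" using c12 d46 d47 d6 by auto
    have d49: "v72_57 \<in> {0}" using c13 d13 d2 d47 by auto
    have d50: "v24_19 \<in> {1}" using c13 d2 d47 d49 by auto
    have d51: "v24_18 \<in> {0}" using c1 b_v24_18 d50 by auto
    have d52: "v36_24 \<in> {1, 2, 3}" using c2 b_v36_24 d39 by auto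
    have d53: "v36_26 \<in> {2}" using c3 b_v18_13 d39 d43 by auto
    have d54: "v18_13 \<in> {1}" using c3 b_v18_13 d39 d53 by auto
    have d55: "v36_27 \<in> {0, 1}" using c4 b_v12_9 d5 d53 by auto
    have d56: "v72_54 \<in> {1}" using c10 d44 d45 d51 d55 by auto
    have d57: "v36_27 \<in> {0}" using c10 d44 d51 d55 d56 by auto
    have d58: "v18_14 \<in> {0, 2}" using c0 b_v9_7 d1 d54 by auto
    have d59: "v12_9 \<in> {1, 2, 3}" using c4 b_v12_9 d53 d57 by auto
    show False using c5 d48 d57 d58 by auto
  qed
qed

lemma pat50: fixes A :: nat shows "\<exists>j<8. SG (72*A+50+j) = 2"
proof (rule ccontr)
  assume H: "\<not> (\<exists>j<8. SG (72*A+50+j) = 2)"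
  have HH: "\<forall>j<8. SG (72*A+50+j) \<noteq> 2" using H by auto
  have w0: "SG (72*A+50) \<noteq> 2" using HH[rule_format, of 0] by (simp add: algebra_simps)
  have w1: "SG (72*A+51) \<noteq> 2" using HH[rule_format, of 1] by (simp add: algebra_simps)
  have w2: "SG (72*A+52) \<noteq> 2" using HH[rule_format, of 2] by (simp add: algebra_simps)
  have w3: "SG (72*A+54) \<noteq> 2" using HH[rule_format, of 4] by (simp add: algebra_simps)
  have w4: "SG (72*A+56) \<noteq> 2" using HH[rule_format, of 6] by (simp add: algebra_simps)
  have w5: "SG (72*A+57) \<noteq> 2" using HH[rule_format, of 7] by (simp add: algebra_simps)
  have c0: "SG (18*A+14) = mex {SG (18*A+13), SG (9*A+7)}" by (rule SG_opt2) (simp|presburger)+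
  have c1: "SG (24*A+19) = mex {SG (24*A+18)}" by (rule SG_opt1) (simp|presburger)+
  have c2: "SG (36*A+25) = mex {SG (36*A+24)}" by (rule SG_opt1) (simp|presburger)+
  have c3: "SG (36*A+26) = mex {SG (36*A+25), SG (18*A+13)}" by (rule SG_opt2) (simp|presburger)+
  have c4: "SG (36*A+27) = mex {SG (36*A+26), SG (12*A+9)}" by (rule SG_opt3) (simp|presburger)+
  have c5: "SG (36*A+28) = mex {SG (36*A+27), SG (18*A+14)}" by (rule SG_opt2) (simp|presburger)+
  have c6: "SG (72*A+50) = mex {SG (72*A+49), SG (36*A+25)}" by (rule SG_opt2) (simp|presburger)+
  have c7: "SG (72*A+51) = mex {SG (72*A+50), SG (24*A+17)}" by (rule SG_opt3) (simp|presburger)+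
  have c8: "SG (72*A+52) = mex {SG (72*A+51), SG (36*A+26)}" by (rule SG_opt2) (simp|presburger)+
  have c9: "SG (72*A+53) = mex {SG (72*A+52)}" by (rule SG_opt1) (simp|presburger)+
  have c10: "SG (72*A+54) = mex {SG (72*A+53), SG (36*A+27), SG (24*A+18)}" by (rule SG_opt6) (simp|presburger)+
  have c11: "SG (72*A+55) = mex {SG (72*A+54)}" by (rule SG_opt1) (simp|presburger)+
  have c12: "SG (72*A+56) = mex {SG (72*A+55), SG (36*A+28)}" by (rule SG_opt2) (simp|presburger)+
  have c13: "SG (72*A+57) = mex {SG (72*A+56), SG (24*A+19)}" by (rule SG_opt3) (simp|presburger)+
  note cs0 = c0 c1 c2 c3 c4 c5 c6 c7 c8 c9 c10 c11 c12 c13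
  note cs = cs0[unfolded mex1 mex2 mex3]
  show False by (rule abs50[of "SG (9*A+7)" "SG (12*A+9)" "SG (18*A+13)" "SG (18*A+14)" "SG (24*A+17)" "SG (24*A+18)" "SG (24*A+19)" "SG (36*A+24)" "SG (36*A+25)" "SG (36*A+26)" "SG (36*A+27)" "SG (36*A+28)" "SG (72*A+49)" "SG (72*A+50)" "SG (72*A+51)" "SG (72*A+52)" "SG (72*A+53)" "SG (72*A+54)" "SG (72*A+55)" "SG (72*A+56)" "SG (72*A+57)", OF SG_le3 SG_le3 SG_le3 SG_le3 SG_le3 SG_le3 SG_le3 SG_le3 SG_le3 SG_le3 SG_le3 SG_le3 SG_le3 SG_le3 SG_le3 SG_le3 SG_le3 SG_le3 SG_le3 SG_le3 SG_le3 w0 w1 w2 w3 w4 w5 cs])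
qed


lemma pat36: fixes B :: nat shows "\<exists>j<8. SG (36*B+14+j) = 2"
proof (cases "even B")
  case True
  then obtain A where "B = 2*A" by auto
  then show ?thesis using pat14[of A] by simp
next
  case False
  then obtain A where "B = 2*A+1" using oddE by blast
  then show ?thesis using pat50[of A] by (simp add: algebra_simps)
qed

lemma SG3: "SG 3 = 2"
proof -
  have "opts 0 = {}" unfolding opts_def by auto
  then have s0: "SG 0 = 0" using SG.simps[of 0] unfolding mex_def by simp
  have s1: "SG 1 = mex {SG 0}" by (rule SG_opt1) auto
  have s2: "SG 2 = mex {SG 1, SG 1}" by (rule SG_opt2) auto
  have s3: "SG 3 = mex {SG 2, SG 1}" by (rule SG_opt3) auto
  show ?thesis using s0 s1 s2 s3 by (simp add: mex1 mex2)
qed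

theorem mainTheorem6:
  fixes n :: nat
  assumes "n > 3"
  shows "\<exists>i::nat. 1 \<le> i \<and> i \<le> 49 \<and> i \<le> n \<and> SG (n - i) = 2"
proof (cases "n \<le> 52")
  case True
  then show ?thesis using assms SG3 by (intro exI[of _ "n - 3"]) auto
next
  case False
  define B where "B = (n - 49 + 21) div 36"
  have b1: "n - 49 \<le> 36*B+14" unfolding B_def by linarith
  have b2: "36*B+14 \<le> n - 14" unfolding B_def using False by linarith
  obtain j where j: "j < 8" "SG (36*B+14+j) = 2" using pat36[of B] by blast
  show ?thesis
  proof (intro exI[of _ "n - (36*B+14+j)"] conjI)
    show "SG (n - (n - (36 * B + 14 + j))) = 2" using j b2 False by (simp add: diff_diff_cancel)
  qed (use j b1 b2 False in linarith)+
qed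

end
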